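(* In the setting below, for each $1\le t\le mn$, $$\left|\mathbb{E}\left(w_t\left(z_t-\frac1n\right)\right)\right|\le \frac{4}{mn}\sqrt{6\sum_{i=1}^{mn}\mathbb{E}(z_i)+8m}.$$
   Context: Setting: $m,n$ are positive integers with $n\ge 1200\sqrt m$. A deck of $mn$ cards with $m$ copies of each label $1,\dots,n$ is shuffled uniformly at random. A fixed guessing strategy is used: in round $t=1,\dots,mn$ the Guesser guesses $g_t\in\{1,\dots,n\}$, a function (possibly randomized independently of the deck) of $y_1,\dots,y_{t-1}$, where $y_t\in\{0,1\}$ is the indicator that the $t$-th card has label $g_t$. For a vector $v$, $v_{\le t}:=(v_1,\dots,v_t)$. For $1\le k\le n$, $1\le t\le mn+1$: $a(k,t):=|\{1\le i<t: g_i=k\}|$. Let $Y:=\lfloor \tfrac16\sqrt m\, n\rfloor$. Let $(z_1,\dots,z_{mn})\in\{0,1\}^{mn}$ be a random vector (on an extension of the probability space), with $c(k,t):=|\{1\le i<t: g_i=k,\ z_i=1\}|$, satisfying almost surely: (a) for all $k,t$: $m-\max\{mn-a(k,t)-Y,0\}\le c(k,t)\le m$; (b) for each $t$, conditioned on $g_{\le t},y_{\le t}$, the coordinates of $z_{\le t}$ are mutually independent and independent from $g_{\le mn},y_{\le mn}$; (c) for each $t$, if $a(g_t,t)<mn-Y$ then $\mathbb{E}(z_t\mid g_{\le t},z_{\le t-1})=\frac{m-c(g_t,t)}{mn-a(g_t,t)-Y}$; (d) for each $t$, if $\mathbb{E}(y_t\mid g_{\le t},y_{\le t-1})\le\mathbb{E}(z_t\mid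 g_{\le t},z_{\le t-1})$ then $y_t\le z_t$. (Such a vector exists.) For $1\le t\le mn$, $w_t\in\{0,1\}$ is the indicator of the event $a(g_t,t)\le \frac12 mn$. *)

theory Defs
  imports "HOL-Probability.Probability"
begin

text \<open>All arrangements of a deck with m copies of each label 1..n (positions 1..mn
  correspond to list indices 0..mn-1).\<close>
definition decks :: "nat \<Rightarrow> nat \<Rightarrow> nat list set" where
  "decks m n = {xs. length xs = m * n \<and> (\<forall>k\<in>{1..n}. count (mset xs) k = m)}"

definition acount :: "(nat \<Rightarrow> nat) \<Rightarrow> nat \<Rightarrow> nat \<Rightarrow> nat" where
  "acount g k t = card {i. 1 \<le> i \<and> i < t \<and> g i = k}"

definition ccount :: "(nat \<Rightarrow> nat) \<Rightarrow> (nat \<Rightarrow> bool) \<Rightarrow> nat \<Rightarrow> nat \<Rightarrow> nat" where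
  "ccount g z k t = card {i. 1 \<le> i \<and> i < t \<and> g i = k \<and> z i}"

definition Ybd :: "nat \<Rightarrow> nat \<Rightarrow> nat" where
  "Ybd m n = nat \<lfloor>sqrt (real m) * real n / 6\<rfloor>"

definition hist_algebra :: "'a measure \<Rightarrow> (nat \<Rightarrow> 'a \<Rightarrow> nat) \<Rightarrow> (nat \<Rightarrow> 'a \<Rightarrow> bool) \<Rightarrow> nat \<Rightarrow> 'a measure" where
  "hist_algebra M g b t = vimage_algebra (space M)
     (\<lambda>\<omega>. (map (\<lambda>i. g i \<omega>) [1..<t+1], map (\<lambda>i. b i \<omega>) [1..<t])) (count_space UNIV)"

definition gy_cell :: "'a measure \<Rightarrow> (nat \<Rightarrow> 'a \<Rightarrow> nat) \<Rightarrow> (nat \<Rightarrow> 'a \<Rightarrow> bool) \<Rightarrow> nat \<Rightarrow> nat list \<Rightarrow> bool list \<Rightarrow> 'a set" where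
  "gy_cell M g y t gs ys = {\<omega> \<in> space M. map (\<lambda>i. g i \<omega>) [1..<t+1] = gs \<and> map (\<lambda>i. y i \<omega>) [1..<t+1] = ys}"

end

theory Submission
  imports Defs
begin


lemma meas_map_list:
  fixes f :: "nat \<Rightarrow> 'a \<Rightarrow> 'b::countable"
  assumes "\<And>x. x \<in> set xs \<Longrightarrow> f x \<in> measurable M (count_space UNIV)"
  shows "(\<lambda>\<omega>. map (\<lambda>i. f i \<omega>) xs) \<in> measurable M (count_space UNIV)"
  using assms
proof (induction xs)
  case Nil then show ?case by simp
next
  case (Cons x xs)
  have IH: "(\<lambda>\<omega>. map (\<lambda>i. f i \<omega>) xs) \<in> measurable M (count_space UNIV)" using Cons by auto
  have "(\<lambda>\<omega>. (\<lambda>v \<omega>. v # map (\<lambda>i. f i \<omega>) xs) (f x \<omega>) \<omega>) \<in> measurable M (count_space UNIV)"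
  proof (rule measurable_compose_countable'[where f="\<lambda>v \<omega>. v # map (\<lambda>i. f i \<omega>) xs" and g="f x" and I=UNIV])
    fix v :: 'b
    show "(\<lambda>\<omega>. v # map (\<lambda>i. f i \<omega>) xs) \<in> measurable M (count_space UNIV)"
      using measurable_compose[OF IH, where g="\<lambda>w. v # w" and L="count_space UNIV"] by simp
  qed (use Cons in auto)
  then show ?case by simp
qed

lemma meas_pair_count:
  fixes f :: "'a \<Rightarrow> 'b::countable" and h :: "'a \<Rightarrow> 'c::countable"
  assumes "f \<in> measurable M (count_space UNIV)" "h \<in> measurable M (count_space UNIV)"
  shows "(\<lambda>\<omega>. (f \<omega>, h \<omega>)) \<in> measurable M (count_space UNIV)"
proof -
  have "(\<lambda>\<omega>. (\<lambda>v \<omega>. (v, h \<omega>)) (f \<omega>) \<omega>) \<in> measurable M (count_space UNIV)"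
  proof (rule measurable_compose_countable'[where f="\<lambda>v \<omega>. (v, h \<omega>)" and g=f and I=UNIV])
    fix v :: 'b
    show "(\<lambda>\<omega>. (v, h \<omega>)) \<in> measurable M (count_space UNIV)"
      using measurable_compose[OF assms(2), where g="\<lambda>w. (v, w)" and L="count_space UNIV"] by simp
  qed (use assms in auto)
  then show ?thesis by simp
qed

lemma acount_cong:
  assumes "\<And>i. 1 \<le> i \<Longrightarrow> i < s \<Longrightarrow> g i = g' i"
  shows "acount g k s = acount g' k s"
  unfolding acount_def using assms by (metis (lifting))

lemma ccount_cong:
  assumes "\<And>i. 1 \<le> i \<Longrightarrow> i < s \<Longrightarrow> g i = g' i" "\<And>i. 1 \<le> i \<Longrightarrow> i < s \<Longrightarrow> z i = z' i"
  shows "ccount g z k s = ccount g' z' k s"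
  unfolding ccount_def using assms by (metis (lifting))

lemma acount_Suc:
  assumes "1 \<le> s"
  shows "acount g k (Suc s) = acount g k s + (if g s = k then 1 else 0)"
proof -
  have "{i. 1 \<le> i \<and> i < Suc s \<and> g i = k} = {i. 1 \<le> i \<and> i < s \<and> g i = k} \<union> (if g s = k then {s} else {})"
    using assms by (auto simp: less_Suc_eq)
  moreover have "finite {i. 1 \<le> i \<and> i < s \<and> g i = k}" by simp
  ultimately show ?thesis unfolding acount_def by auto
qed

lemma ccount_Suc:
  assumes "1 \<le> s"
  shows "ccount g z k (Suc s) = ccount g z k s + (if g s = k \<and> z s then 1 else 0)"
proof -
  have "{i. 1 \<le> i \<and> i < Suc s \<and> g i = k \<and> z i} = {i. 1 \<le> i \<and> i < s \<and> g i = k \<and> z i} \<union> (if g s = k \<and> z s then {s} else {})"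
    using assms by (auto simp: less_Suc_eq)
  moreover have "finite {i. 1 \<le> i \<and> i < s \<and> g i = k \<and> z i}" by simp
  ultimately show ?thesis unfolding ccount_def by auto
qed

lemma acount_le: "acount g k s \<le> s"
proof -
  have "acount g k s \<le> card {1..<s}" unfolding acount_def by (rule card_mono) auto
  then show ?thesis by simp
qed

lemma ccount_le: "ccount g z k s \<le> s"
proof -
  have "ccount g z k s \<le> card {1..<s}" unfolding ccount_def by (rule card_mono) auto
  then show ?thesis by simp
qed

lemma acount_1: "acount g k (Suc 0) = 0" unfolding acount_def by auto
lemma ccount_1: "ccount g z k (Suc 0) = 0" unfolding ccount_def by auto



locale L24 =
  fixes M :: "'a measure" and m n :: nat and g :: "nat \<Rightarrow> 'a \<Rightarrow> nat" and z :: "nat \<Rightarrow> 'a \<Rightarrow> bool"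
  assumes P: "prob_space M"
    and m_pos: "m \<ge> 1" and n_pos: "n \<ge> 1"
    and n_big: "real n \<ge> 1200 * sqrt (real m)"
    and gmeas: "\<And>i. i \<in> {1..m*n} \<Longrightarrow> g i \<in> measurable M (count_space UNIV)"
    and zmeas: "\<And>i. i \<in> {1..m*n} \<Longrightarrow> z i \<in> measurable M (count_space UNIV)"
    and grange: "\<And>i \<omega>. i \<in> {1..m*n} \<Longrightarrow> \<omega> \<in> space M \<Longrightarrow> g i \<omega> \<in> {1..n}"
    and cond_c: "\<forall>s\<in>{1..m*n}. AE \<omega> in M.
        int (acount (\<lambda>i. g i \<omega>) (g s \<omega>) s) < int (m*n) - int (Ybd m n) \<longrightarrow>
        real_cond_exp M (hist_algebra M g z s) (\<lambda>\<omega>. of_bool (z s \<omega>)) \<omega>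
          = (real m - real (ccount (\<lambda>i. g i \<omega>) (\<lambda>i. z i \<omega>) (g s \<omega>) s))
            / (real (m*n) - real (acount (\<lambda>i. g i \<omega>) (g s \<omega>) s) - real (Ybd m n))"
begin

sublocale prob_space M by (rule P)

definition "Tr = real (m*n)"
definition "Yr = real (Ybd m n)"
definition "A k s \<omega> = real (acount (\<lambda>i. g i \<omega>) k s)"
definition "C k s \<omega> = real (ccount (\<lambda>i. g i \<omega>) (\<lambda>i. z i \<omega>) k s)"
definition "H s \<omega> = (of_bool (A (g s \<omega>) s \<omega> \<le> Tr / 2) :: real)"
definition "Q k s \<omega> = (real m - C k s \<omega>) / (Tr - A k s \<omega> - Yr)"
definition "D k s \<omega> = Tr - A k s \<omega> - Yr - 1"
definition "E s \<omega> = H s \<omega> * (of_bool (z s \<omega>) - Q (g s \<omega>) s \<omega>) / D (g s \<omega>) s \<omega>"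
definition "V k s \<omega> = (\<Sum>i\<in>{1..<s}. of_bool (g i \<omega> = k) * E i \<omega>)"
definition "S s \<omega> = (\<Sum>k\<in>{1..n}. (V k s \<omega>)\<^sup>2)"
definition "F j = hist_algebra M g z j"

lemma Yr_le: "Yr \<le> sqrt (real m) * real n / 6"
proof -
  have "0 \<le> sqrt (real m) * real n / 6" by simp
  then show ?thesis unfolding Yr_def Ybd_def by linarith
qed

lemma Yr_nn: "0 \<le> Yr" unfolding Yr_def by simp

lemma sqrt_le_m: "sqrt (real m) \<le> real m"
proof -
  have 1: "1 \<le> sqrt (real m)" using m_pos by simp
  have "sqrt (real m) * 1 \<le> sqrt (real m) * sqrt (real m)" by (rule mult_left_mono[OF 1]) simp
  then show ?thesis by simp
qed

lemma Tr_big: "Tr \<ge> 1200"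
proof -
  have "1 \<le> sqrt (real m)" using m_pos by simp
  then have "real n \<ge> 1200" using n_big by linarith
  moreover have "real n * 1 \<le> real n * real m" by (rule mult_left_mono) (use m_pos in auto)
  then have "real n \<le> real m * real n" by (simp add: mult.commute)
  ultimately show ?thesis unfolding Tr_def of_nat_mult by linarith
qed

lemma Yr_Tr: "Yr \<le> Tr / 6"
proof -
  have "sqrt (real m) * real n \<le> real m * real n" using sqrt_le_m by (simp add: mult_right_mono)
  then show ?thesis using Yr_le unfolding Tr_def by simp
qed

lemma D_big: "A k s \<omega> \<le> Tr / 2 \<Longrightarrow> D k s \<omega> \<ge> Tr / 4"
  unfolding D_def using Yr_Tr Tr_big by linarith

definition hc :: "nat \<Rightarrow> ('a \<Rightarrow> real) \<Rightarrow> bool" where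
  "hc j f \<longleftrightarrow> (\<forall>\<omega>\<in>space M. \<forall>\<omega>'\<in>space M. (\<forall>i\<in>{1..j}. g i \<omega> = g i \<omega>') \<and> (\<forall>i\<in>{1..<j}. z i \<omega> = z i \<omega>') \<longrightarrow> f \<omega> = f \<omega>')"

lemma hcD: "hc j f \<Longrightarrow> \<omega> \<in> space M \<Longrightarrow> \<omega>' \<in> space M \<Longrightarrow> (\<And>i. i \<in> {1..j} \<Longrightarrow> g i \<omega> = g i \<omega>') \<Longrightarrow>
   (\<And>i. i \<in> {1..<j} \<Longrightarrow> z i \<omega> = z i \<omega>') \<Longrightarrow> f \<omega> = f \<omega>'"
  unfolding hc_def by blast

lemma hcI: "(\<And>\<omega> \<omega>'. \<omega> \<in> space M \<Longrightarrow> \<omega>' \<in> space M \<Longrightarrow> (\<And>i. i \<in> {1..j} \<Longrightarrow> g i \<omega> = g i \<omega>') \<Longrightarrow>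
   (\<And>i. i \<in> {1..<j} \<Longrightarrow> z i \<omega> = z i \<omega>') \<Longrightarrow> f \<omega> = f \<omega>') \<Longrightarrow> hc j f"
  unfolding hc_def by blast

lemma hc_F: assumes "hc j f" shows "f \<in> borel_measurable (F j)"
proof -
  define L where "L = (\<lambda>\<omega>. (map (\<lambda>i. g i \<omega>) [1..<j+1], map (\<lambda>i. z i \<omega>) [1..<j]))"
  define \<phi> where "\<phi> x = f (SOME \<omega>. \<omega> \<in> space M \<and> L \<omega> = x)" for x
  have eq: "f \<omega> = \<phi> (L \<omega>)" if "\<omega> \<in> space M" for \<omega>
  proof -
    have ex: "\<exists>\<omega>'. \<omega>' \<in> space M \<and> L \<omega>' = L \<omega>" using that by blast
    define \<omega>' where "\<omega>' = (SOME \<omega>'. \<omega>' \<in> space M \<and> L \<omega>' = L \<omega>)"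
    have w: "\<omega>' \<in> space M \<and> L \<omega>' = L \<omega>" unfolding \<omega>'_def by (rule someI_ex[OF ex])
    then have "(\<forall>i\<in>{1..j}. g i \<omega> = g i \<omega>') \<and> (\<forall>i\<in>{1..<j}. z i \<omega> = z i \<omega>')"
      unfolding L_def by (auto simp: map_eq_conv)
    then have "f \<omega> = f \<omega>'" using hcD[OF assms that] w by blast
    then show ?thesis unfolding \<phi>_def \<omega>'_def by simp
  qed
  have "(\<lambda>\<omega>. \<phi> (L \<omega>)) \<in> borel_measurable (F j)"
  proof (rule measurable_compose[where N="count_space UNIV" and f=L and g=\<phi>])
    show "L \<in> measurable (F j) (count_space UNIV)"
      unfolding F_def hist_algebra_def L_def by (rule measurable_vimage_algebra1) simp
  qed simp
  moreover have "f \<in> borel_measurable (F j) \<longleftrightarrow> (\<lambda>\<omega>. \<phi> (L \<omega>)) \<in> borel_measurable (F j)"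
    by (rule measurable_cong) (simp add: eq F_def hist_algebra_def)
  ultimately show ?thesis by simp
qed

lemma subalg: assumes "j \<le> m*n" shows "subalgebra M (F j)"
proof -
  define L where "L = (\<lambda>\<omega>. (map (\<lambda>i. g i \<omega>) [1..<j+1], map (\<lambda>i. z i \<omega>) [1..<j]))"
  have Lm: "L \<in> measurable M (count_space UNIV)"
  proof -
    have 1: "(\<lambda>\<omega>. map (\<lambda>i. g i \<omega>) [1..<j+1]) \<in> measurable M (count_space UNIV)"
    proof (rule meas_map_list)
      fix x assume "x \<in> set [1..<j+1]"
      then have "x \<in> {1..m*n}" using assms by auto
      then show "g x \<in> measurable M (count_space UNIV)" by (rule gmeas)
    qed
    have 2: "(\<lambda>\<omega>. map (\<lambda>i. z i \<omega>) [1..<j]) \<in> measurable M (count_space UNIV)"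
    proof (rule meas_map_list)
      fix x assume "x \<in> set [1..<j]"
      then have "x \<in> {1..m*n}" using assms by auto
      then show "z x \<in> measurable M (count_space UNIV)" by (rule zmeas)
    qed
    show ?thesis unfolding L_def by (rule meas_pair_count[OF 1 2])
  qed
  have "sets (F j) = {L -` X \<inter> space M | X. X \<in> sets (count_space UNIV)}"
    unfolding F_def hist_algebra_def L_def by (rule sets_vimage_algebra2) simp
  then have "sets (F j) \<subseteq> sets M" using measurable_sets[OF Lm] by auto
  moreover have "space (F j) = space M" unfolding F_def hist_algebra_def by (rule space_vimage_algebra)
  ultimately show ?thesis unfolding subalgebra_def by blast
qed

lemma sfs: assumes "j \<le> m*n" shows "sigma_finite_subalgebra M (F j)"
proof (rule finite_measure_subalgebra_is_sigma_finite)
  show "finite_measure_subalgebra M (F j)"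
    unfolding finite_measure_subalgebra_def finite_measure_subalgebra_axioms_def
    using subalg[OF assms] finite_measure_axioms by simp
qed

lemma hc_M: assumes "j \<le> m*n" "hc j f" shows "f \<in> borel_measurable M"
  using measurable_from_subalg[OF subalg[OF assms(1)] hc_F[OF assms(2)]] .

end

context L24 begin

definition "agree j \<omega> \<omega>' \<longleftrightarrow> (\<forall>i\<in>{1..j}. g i \<omega> = g i \<omega>') \<and> (\<forall>i\<in>{1..<j}. z i \<omega> = z i \<omega>')"

lemma hcI2: "(\<And>\<omega> \<omega>'. \<omega> \<in> space M \<Longrightarrow> \<omega>' \<in> space M \<Longrightarrow> agree j \<omega> \<omega>' \<Longrightarrow> f \<omega> = f \<omega>') \<Longrightarrow> hc j f"
  unfolding hc_def agree_def by blast

lemma agA: "agree j \<omega> \<omega>' \<Longrightarrow> s \<le> j + 1 \<Longrightarrow> A k s \<omega> = A k s \<omega>'"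
  unfolding A_def agree_def by (subst acount_cong[where g'="\<lambda>i. g i \<omega>'"]) auto

lemma agC: "agree j \<omega> \<omega>' \<Longrightarrow> s \<le> j \<Longrightarrow> C k s \<omega> = C k s \<omega>'"
  unfolding C_def agree_def by (subst ccount_cong[where g'="\<lambda>i. g i \<omega>'" and z'="\<lambda>i. z i \<omega>'"]) auto

lemma agg: "agree j \<omega> \<omega>' \<Longrightarrow> 1 \<le> s \<Longrightarrow> s \<le> j \<Longrightarrow> g s \<omega> = g s \<omega>'"
  unfolding agree_def by auto

lemma agz: "agree j \<omega> \<omega>' \<Longrightarrow> 1 \<le> s \<Longrightarrow> s < j \<Longrightarrow> z s \<omega> = z s \<omega>'"
  unfolding agree_def by auto

lemma agQ: "agree j \<omega> \<omega>' \<Longrightarrow> s \<le> j \<Longrightarrow> Q k s \<omega> = Q k s \<omega>'"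
  unfolding Q_def using agA agC by simp

lemma agD: "agree j \<omega> \<omega>' \<Longrightarrow> s \<le> j \<Longrightarrow> D k s \<omega> = D k s \<omega>'"
  unfolding D_def using agA by simp

lemma agH: "agree j \<omega> \<omega>' \<Longrightarrow> 1 \<le> s \<Longrightarrow> s \<le> j \<Longrightarrow> H s \<omega> = H s \<omega>'"
  unfolding H_def using agA agg by simp

lemma agE: "agree j \<omega> \<omega>' \<Longrightarrow> 1 \<le> s \<Longrightarrow> s < j \<Longrightarrow> E s \<omega> = E s \<omega>'"
  unfolding E_def using agH[of j \<omega> \<omega>' s] agg[of j \<omega> \<omega>' s] agz[of j \<omega> \<omega>' s] agQ[of j \<omega> \<omega>' s] agD[of j \<omega> \<omega>' s]
  by simp

lemma agV: "agree j \<omega> \<omega>' \<Longrightarrow> s \<le> j \<Longrightarrow> V k s \<omega> = V k s \<omega>'"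
  unfolding V_def
proof (rule sum.cong)
  fix i assume "agree j \<omega> \<omega>'" "s \<le> j" "i \<in> {1..<s}"
  then show "of_bool (g i \<omega> = k) * E i \<omega> = of_bool (g i \<omega>' = k) * E i \<omega>'"
    using agE[of j \<omega> \<omega>' i] agg[of j \<omega> \<omega>' i] by simp
qed simp

lemma agS: "agree j \<omega> \<omega>' \<Longrightarrow> s \<le> j \<Longrightarrow> S s \<omega> = S s \<omega>'"
  unfolding S_def using agV by simp

lemma intg: "(f::'a \<Rightarrow> real) \<in> borel_measurable M \<Longrightarrow> (\<And>\<omega>. \<omega> \<in> space M \<Longrightarrow> \<bar>f \<omega>\<bar> \<le> B) \<Longrightarrow> integrable M f"
  by (rule integrable_const_bound[where B=B]) auto

lemma zz_meas: "i \<in> {1..m*n} \<Longrightarrow> (\<lambda>\<omega>. of_bool (z i \<omega>) :: real) \<in> borel_measurable M"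
  using measurable_compose[OF zmeas, where g="\<lambda>b. of_bool b :: real" and L=borel] by simp

definition "bQ = 4 * (real m + Tr) / Tr"
definition "bE = 4 * (1 + bQ) / Tr"

lemma Tr_pos: "Tr > 0" using Tr_big by simp

lemma denom_big: "A k s \<omega> \<le> Tr / 2 \<Longrightarrow> Tr - A k s \<omega> - Yr \<ge> Tr / 4"
  using D_big[of k s \<omega>] unfolding D_def by linarith

lemma Q_bound: assumes "A k s \<omega> \<le> Tr / 2" "s \<le> m*n" shows "\<bar>Q k s \<omega>\<bar> \<le> bQ"
proof -
  have c: "C k s \<omega> \<le> real s" unfolding C_def using ccount_le by simp
  have c0: "C k s \<omega> \<ge> 0" unfolding C_def by simp
  have sT: "real s \<le> Tr" unfolding Tr_def using assms(2) by (simp only: of_nat_le_iff)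
  have m0: "0 \<le> real m" by simp
  have n1: "\<bar>real m - C k s \<omega>\<bar> \<le> real m + Tr"
  proof (rule abs_leI)
    show "real m - C k s \<omega> \<le> real m + Tr" using c0 Tr_pos by linarith
    show "- (real m - C k s \<omega>) \<le> real m + Tr" using c sT m0 by linarith
  qed
  have d: "Tr / 4 \<le> Tr - A k s \<omega> - Yr" using denom_big[OF assms(1)] .
  have y0: "0 \<le> real m + Tr" using m0 Tr_pos by linarith
  have w0: "0 < Tr / 4" using Tr_pos by simp
  have "\<bar>real m - C k s \<omega>\<bar> / (Tr - A k s \<omega> - Yr) \<le> (real m + Tr) / (Tr / 4)"
    by (rule frac_le[OF y0 n1 w0 d])
  moreover have "\<bar>Q k s \<omega>\<bar> = \<bar>real m - C k s \<omega>\<bar> / (Tr - A k s \<omega> - Yr)"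
  proof -
    have p: "0 < Tr - A k s \<omega> - Yr" using d w0 by linarith
    show ?thesis unfolding Q_def abs_divide abs_of_pos[OF p] ..
  qed
  moreover have "(real m + Tr) / (Tr / 4) = bQ" unfolding bQ_def using Tr_pos by (simp add: field_simps)
  ultimately show ?thesis by linarith
qed

lemma bQ_nn: "bQ \<ge> 0" unfolding bQ_def using Tr_pos by simp

lemma E_bound: assumes "s \<le> m*n" shows "\<bar>E s \<omega>\<bar> \<le> bE"
proof (cases "A (g s \<omega>) s \<omega> \<le> Tr / 2")
  case True
  have q: "\<bar>Q (g s \<omega>) s \<omega>\<bar> \<le> bQ" using Q_bound[OF True assms] .
  have "\<bar>of_bool (z s \<omega>) - Q (g s \<omega>) s \<omega>\<bar> \<le> 1 + bQ" using q by (cases "z s \<omega>") auto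
  moreover have "D (g s \<omega>) s \<omega> \<ge> Tr / 4" using D_big[OF True] .
  moreover have "0 \<le> 1 + bQ" using bQ_nn by linarith
  moreover have "0 < Tr / 4" using Tr_pos by simp
  ultimately have "\<bar>of_bool (z s \<omega>) - Q (g s \<omega>) s \<omega>\<bar> / D (g s \<omega>) s \<omega> \<le> (1 + bQ) / (Tr / 4)"
    by (intro frac_le) assumption+
  moreover have "\<bar>E s \<omega>\<bar> = \<bar>of_bool (z s \<omega>) - Q (g s \<omega>) s \<omega>\<bar> / D (g s \<omega>) s \<omega>"
  proof -
    have p: "0 < D (g s \<omega>) s \<omega>" using D_big[OF True] Tr_pos by linarith
    have e: "E s \<omega> = (of_bool (z s \<omega>) - Q (g s \<omega>) s \<omega>) / D (g s \<omega>) s \<omega>"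
      unfolding E_def H_def using True by simp
    show ?thesis unfolding e abs_divide abs_of_pos[OF p] ..
  qed
  moreover have "(1 + bQ) / (Tr / 4) = bE" unfolding bE_def using Tr_pos by (simp add: field_simps)
  ultimately show ?thesis by linarith
next
  case False
  then show ?thesis unfolding E_def H_def bE_def using bQ_nn Tr_pos by simp
qed

lemma bE_nn: "bE \<ge> 0" unfolding bE_def using Tr_pos bQ_nn by simp

lemma V_bound: assumes "s \<le> m*n + 1" shows "\<bar>V k s \<omega>\<bar> \<le> Tr * bE"
proof -
  have "\<bar>V k s \<omega>\<bar> \<le> (\<Sum>i\<in>{1..<s}. \<bar>of_bool (g i \<omega> = k) * E i \<omega>\<bar>)" unfolding V_def by (rule sum_abs)
  also have "\<dots> \<le> (\<Sum>i\<in>{1..<s}. bE)"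
  proof (rule sum_mono)
    fix i assume "i \<in> {1..<s}"
    then have "i \<le> m*n" using assms by auto
    then show "\<bar>of_bool (g i \<omega> = k) * E i \<omega>\<bar> \<le> bE" using E_bound[of i \<omega>] bE_nn by (cases "g i \<omega> = k") auto
  qed
  also have "\<dots> = real (s - 1) * bE" by simp
  also have "\<dots> \<le> Tr * bE"
  proof (rule mult_right_mono[OF _ bE_nn])
    have "s - 1 \<le> m*n" using assms by simp
    then show "real (s - 1) \<le> Tr" unfolding Tr_def using of_nat_le_iff by blast
  qed
  finally show ?thesis .
qed

end

context L24 begin

lemma Yr_lt: "Yr < Tr / 2" using Yr_Tr Tr_pos by linarith

lemma key:
  assumes j: "j \<in> {1..m*n}" and fm: "f \<in> borel_measurable (F j)"
    and fb: "\<And>\<omega>. \<omega> \<in> space M \<Longrightarrow> \<bar>f \<omega>\<bar> \<le> B"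
    and fz: "\<And>\<omega>. \<omega> \<in> space M \<Longrightarrow> f \<omega> \<noteq> 0 \<Longrightarrow> A (g j \<omega>) j \<omega> \<le> Tr / 2"
  shows "integrable M (\<lambda>\<omega>. f \<omega> * Q (g j \<omega>) j \<omega>)"
    and "(\<integral>\<omega>. f \<omega> * of_bool (z j \<omega>) \<partial>M) = (\<integral>\<omega>. f \<omega> * Q (g j \<omega>) j \<omega> \<partial>M)"
proof -
  have jle: "j \<le> m*n" using j by simp
  interpret SF: sigma_finite_subalgebra M "F j" by (rule sfs[OF jle])
  have fM: "f \<in> borel_measurable M" by (rule measurable_from_subalg[OF subalg[OF jle] fm])
  have zM: "(\<lambda>\<omega>. of_bool (z j \<omega>) :: real) \<in> borel_measurable M" by (rule zz_meas[OF j])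
  have B0: "\<bar>f \<omega>\<bar> * 1 \<le> B" if "\<omega> \<in> space M" for \<omega> using fb[OF that] by simp
  have int: "integrable M (\<lambda>\<omega>. f \<omega> * of_bool (z j \<omega>))"
  proof (rule intg[where B=B])
    fix \<omega> assume "\<omega> \<in> space M"
    then show "\<bar>f \<omega> * of_bool (z j \<omega>)\<bar> \<le> B" using fb[of \<omega>] by (cases "z j \<omega>") auto
  qed (use fM zM in simp)
  have QM: "(\<lambda>\<omega>. Q (g j \<omega>) j \<omega>) \<in> borel_measurable M"
  proof (rule hc_M[OF jle], rule hcI2)
    fix \<omega> \<omega>' assume "agree j \<omega> \<omega>'"
    then show "Q (g j \<omega>) j \<omega> = Q (g j \<omega>') j \<omega>'" using agQ[of j \<omega> \<omega>' j] agg[of j \<omega> \<omega>' j] j by simp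
  qed
  let ?rc = "real_cond_exp M (F j) (\<lambda>\<omega>. of_bool (z j \<omega>))"
  have r1: "integrable M (\<lambda>\<omega>. f \<omega> * ?rc \<omega>)" and r2: "(\<integral>\<omega>. f \<omega> * ?rc \<omega> \<partial>M) = (\<integral>\<omega>. f \<omega> * of_bool (z j \<omega>) \<partial>M)"
    using SF.real_cond_exp_intg[OF int fm zM] by auto
  have ae0: "AE \<omega> in M. int (acount (\<lambda>i. g i \<omega>) (g j \<omega>) j) < int (m*n) - int (Ybd m n) \<longrightarrow>
        ?rc \<omega> = (real m - real (ccount (\<lambda>i. g i \<omega>) (\<lambda>i. z i \<omega>) (g j \<omega>) j))
            / (real (m*n) - real (acount (\<lambda>i. g i \<omega>) (g j \<omega>) j) - real (Ybd m n))"
    using cond_c j unfolding F_def by blast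
  have ae: "AE \<omega> in M. f \<omega> * ?rc \<omega> = f \<omega> * Q (g j \<omega>) j \<omega>"
    using ae0
  proof (rule AE_mp, intro AE_I2 impI)
    fix \<omega> assume \<omega>: "\<omega> \<in> space M" and h: "int (acount (\<lambda>i. g i \<omega>) (g j \<omega>) j) < int (m*n) - int (Ybd m n) \<longrightarrow>
        ?rc \<omega> = (real m - real (ccount (\<lambda>i. g i \<omega>) (\<lambda>i. z i \<omega>) (g j \<omega>) j))
            / (real (m*n) - real (acount (\<lambda>i. g i \<omega>) (g j \<omega>) j) - real (Ybd m n))"
    show "f \<omega> * ?rc \<omega> = f \<omega> * Q (g j \<omega>) j \<omega>"
    proof (cases "f \<omega> = 0")
      case False
      then have a: "A (g j \<omega>) j \<omega> \<le> Tr / 2" using fz \<omega> by blast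
      then have "real (acount (\<lambda>i. g i \<omega>) (g j \<omega>) j) < real (m*n) - real (Ybd m n)"
        using Yr_lt unfolding A_def Tr_def Yr_def by linarith
      then have "int (acount (\<lambda>i. g i \<omega>) (g j \<omega>) j) < int (m*n) - int (Ybd m n)" by linarith
      then have "?rc \<omega> = Q (g j \<omega>) j \<omega>" using h unfolding Q_def A_def C_def Tr_def Yr_def by simp
      then show ?thesis by simp
    qed simp
  qed
  have m1: "(\<lambda>\<omega>. f \<omega> * ?rc \<omega>) \<in> borel_measurable M" using fM borel_measurable_cond_exp2 by measurable
  have m2: "(\<lambda>\<omega>. f \<omega> * Q (g j \<omega>) j \<omega>) \<in> borel_measurable M" using fM QM by measurable
  show "integrable M (\<lambda>\<omega>. f \<omega> * Q (g j \<omega>) j \<omega>)"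
    using integrable_cong_AE[OF m1 m2 ae] r1 by simp
  show "(\<integral>\<omega>. f \<omega> * of_bool (z j \<omega>) \<partial>M) = (\<integral>\<omega>. f \<omega> * Q (g j \<omega>) j \<omega> \<partial>M)"
    using integral_cong_AE[OF m1 m2 ae] r2 by simp
qed

definition "q0 = real m / (Tr - Yr)"

lemma A_Suc: "1 \<le> s \<Longrightarrow> A k (Suc s) \<omega> = A k s \<omega> + of_bool (g s \<omega> = k)"
  unfolding A_def by (simp add: acount_Suc)
lemma C_Suc: "1 \<le> s \<Longrightarrow> C k (Suc s) \<omega> = C k s \<omega> + of_bool (g s \<omega> = k \<and> z s \<omega>)"
  unfolding C_def by (simp add: ccount_Suc)
lemma V_Suc: "1 \<le> s \<Longrightarrow> V k (Suc s) \<omega> = V k s \<omega> + of_bool (g s \<omega> = k) * E s \<omega>"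
  unfolding V_def by (simp add: sum.atLeastLessThan_Suc)

lemma ident: assumes "1 \<le> s" shows "A k s \<omega> \<le> Tr / 2 \<longrightarrow> Q k s \<omega> = q0 - V k s \<omega>"
  using assms
proof (induction s rule: nat_induct_at_least)
  case base
  show ?case unfolding Q_def q0_def V_def C_def A_def by (simp add: acount_1 ccount_1)
next
  case (Suc s)
  show ?case
  proof
    assume a: "A k (Suc s) \<omega> \<le> Tr / 2"
    show "Q k (Suc s) \<omega> = q0 - V k (Suc s) \<omega>"
    proof (cases "g s \<omega> = k")
      case False
      then have "A k (Suc s) \<omega> = A k s \<omega>" "C k (Suc s) \<omega> = C k s \<omega>" "V k (Suc s) \<omega> = V k s \<omega>"
        using A_Suc[OF Suc.hyps(1)] C_Suc[OF Suc.hyps(1)] V_Suc[OF Suc.hyps(1)] by auto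
      then show ?thesis using Suc.IH a unfolding Q_def by simp
    next
      case True
      have As: "A k (Suc s) \<omega> = A k s \<omega> + 1" using A_Suc[OF Suc.hyps(1)] True by simp
      have Cs: "C k (Suc s) \<omega> = C k s \<omega> + of_bool (z s \<omega>)" using C_Suc[OF Suc.hyps(1)] True by simp
      have Vs: "V k (Suc s) \<omega> = V k s \<omega> + E s \<omega>" using V_Suc[OF Suc.hyps(1)] True by simp
      have a0: "A k s \<omega> \<le> Tr / 2" using a As by simp
      have IH: "Q k s \<omega> = q0 - V k s \<omega>" using Suc.IH a0 by simp
      have Es: "E s \<omega> = (of_bool (z s \<omega>) - Q k s \<omega>) / D k s \<omega>"
        unfolding E_def H_def using True a0 by simp
      define N where "N = Tr - A k s \<omega> - Yr"
      have N1: "N - 1 \<ge> Tr / 4" using D_big[OF a0] unfolding D_def N_def by simp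
      have Npos: "N > 0" "N - 1 > 0" using N1 Tr_pos by auto
      have D: "D k s \<omega> = N - 1" unfolding D_def N_def by simp
      have Q0: "Q k s \<omega> = (real m - C k s \<omega>) / N" unfolding Q_def N_def by simp
      have Q1: "Q k (Suc s) \<omega> = (real m - C k s \<omega> - of_bool (z s \<omega>)) / (N - 1)"
        unfolding Q_def N_def using As Cs by (simp add: algebra_simps)
      have "Q k (Suc s) \<omega> = Q k s \<omega> - E s \<omega>"
        unfolding Q1 Es D Q0 using Npos by (simp add: field_simps)
      then show ?thesis using IH Vs by simp
    qed
  qed
qed

end

context L24 begin

lemma E_meas: assumes "1 \<le> s" "s < m*n" shows "E s \<in> borel_measurable M"
proof (rule hc_M[of "Suc s"], use assms in simp, rule hcI2)
  fix \<omega> \<omega>' assume "agree (Suc s) \<omega> \<omega>'"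
  then show "E s \<omega> = E s \<omega>'" using agE[of "Suc s" \<omega> \<omega>' s] assms by simp
qed

lemma S_meas: assumes "s \<le> m*n" shows "S s \<in> borel_measurable M"
proof (rule hc_M[OF assms], rule hcI2)
  fix \<omega> \<omega>' assume "agree s \<omega> \<omega>'"
  then show "S s \<omega> = S s \<omega>'" using agS[of s \<omega> \<omega>' s] by simp
qed

lemma S_bound: assumes "s \<le> m*n + 1" shows "\<bar>S s \<omega>\<bar> \<le> real n * (Tr * bE)\<^sup>2"
proof -
  have "\<bar>S s \<omega>\<bar> = (\<Sum>k\<in>{1..n}. (V k s \<omega>)\<^sup>2)" unfolding S_def by (simp add: sum_nonneg)
  also have "\<dots> \<le> (\<Sum>k\<in>{1..n}. (Tr * bE)\<^sup>2)"
  proof (rule sum_mono)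
    fix k
    have "\<bar>V k s \<omega>\<bar> \<le> Tr * bE" by (rule V_bound[OF assms])
    then show "(V k s \<omega>)\<^sup>2 \<le> (Tr * bE)\<^sup>2" by (metis abs_ge_zero abs_le_square_iff abs_of_nonneg order_trans)
  qed
  also have "\<dots> = real n * (Tr * bE)\<^sup>2" by simp
  finally show ?thesis .
qed

lemma S_pt: assumes "1 \<le> s" "g s \<omega> \<in> {1..n}"
  shows "S (Suc s) \<omega> = S s \<omega> + 2 * (V (g s \<omega>) s \<omega> * E s \<omega>) + (E s \<omega>)\<^sup>2"
proof -
  have "S (Suc s) \<omega> = (\<Sum>k\<in>{1..n}. (V k s \<omega>)\<^sup>2 + (if k = g s \<omega> then 2 * (V k s \<omega> * E s \<omega>) + (E s \<omega>)\<^sup>2 else 0))"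
    unfolding S_def
  proof (rule sum.cong)
    fix k show "(V k (Suc s) \<omega>)\<^sup>2 = (V k s \<omega>)\<^sup>2 + (if k = g s \<omega> then 2 * (V k s \<omega> * E s \<omega>) + (E s \<omega>)\<^sup>2 else 0)"
      using V_Suc[OF assms(1), of k \<omega>] by (cases "k = g s \<omega>") (auto simp: power2_eq_square algebra_simps)
  qed simp
  also have "\<dots> = S s \<omega> + (2 * (V (g s \<omega>) s \<omega> * E s \<omega>) + (E s \<omega>)\<^sup>2)"
    unfolding S_def sum.distrib using assms(2) by (simp add: sum.delta')
  finally show ?thesis by simp
qed

lemma VE_zero: assumes s: "1 \<le> s" "s < m*n"
  shows "integrable M (\<lambda>\<omega>. V (g s \<omega>) s \<omega> * E s \<omega>)" "(\<integral>\<omega>. V (g s \<omega>) s \<omega> * E s \<omega> \<partial>M) = 0"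
proof -
  have j: "s \<in> {1..m*n}" using s by simp
  define f where "f \<omega> = V (g s \<omega>) s \<omega> * H s \<omega> / D (g s \<omega>) s \<omega>" for \<omega>
  have fF: "f \<in> borel_measurable (F s)"
  proof (rule hc_F, rule hcI2)
    fix \<omega> \<omega>' assume ag: "agree s \<omega> \<omega>'"
    then show "f \<omega> = f \<omega>'" unfolding f_def
      using agV[OF ag, of s] agH[OF ag, of s] agD[OF ag, of s] agg[OF ag, of s] s by simp
  qed
  have fM: "f \<in> borel_measurable M" by (rule measurable_from_subalg[OF subalg fF]) (use s in simp)
  have fb: "\<bar>f \<omega>\<bar> \<le> 4 * bE" for \<omega>
  proof (cases "A (g s \<omega>) s \<omega> \<le> Tr / 2")
    case True
    have "\<bar>V (g s \<omega>) s \<omega>\<bar> \<le> Tr * bE" by (rule V_bound) (use s in simp)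
    moreover have "D (g s \<omega>) s \<omega> \<ge> Tr / 4" using D_big[OF True] .
    moreover have "0 \<le> Tr * bE" using Tr_pos bE_nn by simp
    moreover have "0 < Tr / 4" using Tr_pos by simp
    ultimately have "\<bar>V (g s \<omega>) s \<omega>\<bar> / D (g s \<omega>) s \<omega> \<le> (Tr * bE) / (Tr / 4)"
      by (intro frac_le) assumption+
    moreover have "(Tr * bE) / (Tr / 4) = 4 * bE" using Tr_pos by simp
    moreover have "\<bar>f \<omega>\<bar> = \<bar>V (g s \<omega>) s \<omega>\<bar> / D (g s \<omega>) s \<omega>"
    proof -
      have p: "0 < D (g s \<omega>) s \<omega>" using D_big[OF True] Tr_pos by linarith
      have e: "f \<omega> = V (g s \<omega>) s \<omega> / D (g s \<omega>) s \<omega>"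
        unfolding f_def H_def using True by simp
      show ?thesis unfolding e abs_divide abs_of_pos[OF p] ..
    qed
    ultimately show ?thesis by linarith
  next
    case False then show ?thesis unfolding f_def H_def using bE_nn by simp
  qed
  have fz: "A (g s \<omega>) s \<omega> \<le> Tr / 2" if "f \<omega> \<noteq> 0" for \<omega>
    using that unfolding f_def H_def by (cases "A (g s \<omega>) s \<omega> \<le> Tr / 2") auto
  note K = key[OF j fF fb fz]
  have zM: "(\<lambda>\<omega>. of_bool (z s \<omega>) :: real) \<in> borel_measurable M" by (rule zz_meas[OF j])
  have i1: "integrable M (\<lambda>\<omega>. f \<omega> * of_bool (z s \<omega>))"
  proof (rule intg[where B="4*bE"])
    fix \<omega> show "\<bar>f \<omega> * of_bool (z s \<omega>)\<bar> \<le> 4 * bE" using fb[of \<omega>] by (cases "z s \<omega>") auto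
  qed (use fM zM in simp)
  have pt: "V (g s \<omega>) s \<omega> * E s \<omega> = f \<omega> * of_bool (z s \<omega>) - f \<omega> * Q (g s \<omega>) s \<omega>" for \<omega>
    unfolding f_def E_def by (simp add: divide_inverse algebra_simps)
  show "integrable M (\<lambda>\<omega>. V (g s \<omega>) s \<omega> * E s \<omega>)"
    unfolding pt using i1 K(1) by simp
  show "(\<integral>\<omega>. V (g s \<omega>) s \<omega> * E s \<omega> \<partial>M) = 0"
    unfolding pt using Bochner_Integration.integral_diff[OF i1 K(1)] K(2) by simp
qed

lemma S_step: assumes s: "1 \<le> s" "s < m*n"
  shows "(\<integral>\<omega>. S (Suc s) \<omega> \<partial>M) = (\<integral>\<omega>. S s \<omega> \<partial>M) + (\<integral>\<omega>. (E s \<omega>)\<^sup>2 \<partial>M)"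
proof -
  have j: "s \<in> {1..m*n}" using s by simp
  have iS: "integrable M (S s)"
    by (rule intg[OF S_meas S_bound]) (use s in auto)
  have iE: "integrable M (\<lambda>\<omega>. (E s \<omega>)\<^sup>2)"
  proof (rule intg[where B="bE\<^sup>2"])
    show "(\<lambda>\<omega>. (E s \<omega>)\<^sup>2) \<in> borel_measurable M" using E_meas[OF s] by measurable
    fix \<omega> have "\<bar>E s \<omega>\<bar> \<le> bE" by (rule E_bound) (use s in simp)
    then show "\<bar>(E s \<omega>)\<^sup>2\<bar> \<le> bE\<^sup>2" using abs_le_square_iff[of "E s \<omega>" bE] bE_nn by simp
  qed
  have "(\<integral>\<omega>. S (Suc s) \<omega> \<partial>M) = (\<integral>\<omega>. S s \<omega> + 2 * (V (g s \<omega>) s \<omega> * E s \<omega>) + (E s \<omega>)\<^sup>2 \<partial>M)"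
  proof (rule Bochner_Integration.integral_cong[OF refl])
    fix \<omega> assume "\<omega> \<in> space M"
    then have "g s \<omega> \<in> {1..n}" using grange j by blast
    then show "S (Suc s) \<omega> = S s \<omega> + 2 * (V (g s \<omega>) s \<omega> * E s \<omega>) + (E s \<omega>)\<^sup>2" using S_pt s by blast
  qed
  also have "\<dots> = (\<integral>\<omega>. S s \<omega> \<partial>M) + 2 * (\<integral>\<omega>. V (g s \<omega>) s \<omega> * E s \<omega> \<partial>M) + (\<integral>\<omega>. (E s \<omega>)\<^sup>2 \<partial>M)"
    using iS iE VE_zero(1)[OF s] by simp
  finally show ?thesis using VE_zero(2)[OF s] by simp
qed

lemma E2_bound: assumes s: "1 \<le> s" "s \<le> m*n"
  shows "(\<integral>\<omega>. (E s \<omega>)\<^sup>2 \<partial>M) \<le> 16 / Tr\<^sup>2 * (\<integral>\<omega>. of_bool (z s \<omega>) \<partial>M)"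
proof -
  have j: "s \<in> {1..m*n}" using s by simp
  define f where "f \<omega> = H s \<omega> * Q (g s \<omega>) s \<omega> / (D (g s \<omega>) s \<omega>)\<^sup>2" for \<omega>
  define h where "h \<omega> = H s \<omega> / (D (g s \<omega>) s \<omega>)\<^sup>2" for \<omega>
  have fF: "f \<in> borel_measurable (F s)"
  proof (rule hc_F, rule hcI2)
    fix \<omega> \<omega>' assume ag: "agree s \<omega> \<omega>'"
    then show "f \<omega> = f \<omega>'" unfolding f_def
      using agQ[OF ag, of s] agH[OF ag, of s] agD[OF ag, of s] agg[OF ag, of s] s by simp
  qed
  have hF: "h \<in> borel_measurable (F s)"
  proof (rule hc_F, rule hcI2)
    fix \<omega> \<omega>' assume ag: "agree s \<omega> \<omega>'"
    then show "h \<omega> = h \<omega>'" unfolding h_def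
      using agH[OF ag, of s] agD[OF ag, of s] agg[OF ag, of s] s by simp
  qed
  have fM: "f \<in> borel_measurable M" by (rule measurable_from_subalg[OF subalg fF]) (use s in simp)
  have hM: "h \<in> borel_measurable M" by (rule measurable_from_subalg[OF subalg hF]) (use s in simp)
  have hb: "0 \<le> h \<omega> \<and> h \<omega> \<le> 16 / Tr\<^sup>2" for \<omega>
  proof (cases "A (g s \<omega>) s \<omega> \<le> Tr / 2")
    case True
    have d: "D (g s \<omega>) s \<omega> \<ge> Tr / 4" using D_big[OF True] .
    then have "(Tr/4)\<^sup>2 \<le> (D (g s \<omega>) s \<omega>)\<^sup>2" using Tr_pos by (intro power_mono) auto
    moreover have "0 < (D (g s \<omega>) s \<omega>)\<^sup>2" using d Tr_pos by simp
    moreover have "0 < (Tr/4)\<^sup>2" using Tr_pos by simp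
    ultimately have "1 / (D (g s \<omega>) s \<omega>)\<^sup>2 \<le> 1 / (Tr/4)\<^sup>2" by (intro divide_left_mono) auto
    moreover have "1 / (Tr/4)\<^sup>2 = 16 / Tr\<^sup>2" by (simp add: power2_eq_square field_simps)
    moreover have "h \<omega> = 1 / (D (g s \<omega>) s \<omega>)\<^sup>2" unfolding h_def H_def using True by simp
    ultimately show ?thesis by simp
  next
    case False then show ?thesis unfolding h_def H_def by simp
  qed
  have fb: "\<bar>f \<omega>\<bar> \<le> 16 / Tr\<^sup>2 * bQ" for \<omega>
  proof (cases "A (g s \<omega>) s \<omega> \<le> Tr / 2")
    case True
    have "\<bar>f \<omega>\<bar> = h \<omega> * \<bar>Q (g s \<omega>) s \<omega>\<bar>" unfolding f_def h_def H_def using True by (simp add: abs_mult)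
    also have "\<dots> \<le> 16 / Tr\<^sup>2 * bQ" using hb[of \<omega>] Q_bound[OF True s(2)] by (intro mult_mono) auto
    finally show ?thesis .
  next
    case False then show ?thesis unfolding f_def H_def using bQ_nn by simp
  qed
  have fz: "A (g s \<omega>) s \<omega> \<le> Tr / 2" if "f \<omega> \<noteq> 0" for \<omega>
    using that unfolding f_def H_def by (cases "A (g s \<omega>) s \<omega> \<le> Tr / 2") auto
  note K = key[OF j fF fb fz]
  have zM: "(\<lambda>\<omega>. of_bool (z s \<omega>) :: real) \<in> borel_measurable M" by (rule zz_meas[OF j])
  have i1: "integrable M (\<lambda>\<omega>. f \<omega> * of_bool (z s \<omega>))"
  proof (rule intg[where B="16 / Tr\<^sup>2 * bQ"])
    fix \<omega> show "\<bar>f \<omega> * of_bool (z s \<omega>)\<bar> \<le> 16 / Tr\<^sup>2 * bQ" using fb[of \<omega>] by (cases "z s \<omega>") auto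
  qed (use fM zM in simp)
  have i2: "integrable M (\<lambda>\<omega>. h \<omega> * of_bool (z s \<omega>))"
  proof (rule intg[where B="16 / Tr\<^sup>2"])
    fix \<omega> show "\<bar>h \<omega> * of_bool (z s \<omega>)\<bar> \<le> 16 / Tr\<^sup>2" using hb[of \<omega>] by (cases "z s \<omega>") auto
  qed (use hM zM in simp)
  have iz: "integrable M (\<lambda>\<omega>. of_bool (z s \<omega>) :: real)"
    by (rule intg[where B=1]) (use zM in auto)
  have HH: "H s \<omega> * H s \<omega> = H s \<omega>" for \<omega> unfolding H_def by simp
  have pt: "(E s \<omega>)\<^sup>2 = h \<omega> * of_bool (z s \<omega>) - 2 * (f \<omega> * of_bool (z s \<omega>)) + f \<omega> * Q (g s \<omega>) s \<omega>" for \<omega>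
  proof (cases "A (g s \<omega>) s \<omega> \<le> Tr / 2")
    case True
    have "D (g s \<omega>) s \<omega> \<noteq> 0" using D_big[OF True] Tr_pos by linarith
    then show ?thesis unfolding E_def f_def h_def H_def using True
      by (cases "z s \<omega>") (simp_all add: power2_eq_square field_simps)
  next
    case False then show ?thesis unfolding E_def f_def h_def H_def by simp
  qed
  have fQ: "f \<omega> * Q (g s \<omega>) s \<omega> \<ge> 0" for \<omega>
  proof -
    have "f \<omega> * Q (g s \<omega>) s \<omega> = h \<omega> * (Q (g s \<omega>) s \<omega>)\<^sup>2" unfolding f_def h_def by (simp add: power2_eq_square)
    then show ?thesis using hb[of \<omega>] by simp
  qed
  have "(\<integral>\<omega>. (E s \<omega>)\<^sup>2 \<partial>M) = (\<integral>\<omega>. h \<omega> * of_bool (z s \<omega>) - 2 * (f \<omega> * of_bool (z s \<omega>)) + f \<omega> * Q (g s \<omega>) s \<omega> \<partial>M)"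
    unfolding pt ..
  also have "\<dots> = (\<integral>\<omega>. h \<omega> * of_bool (z s \<omega>) \<partial>M) - 2 * (\<integral>\<omega>. f \<omega> * of_bool (z s \<omega>) \<partial>M) + (\<integral>\<omega>. f \<omega> * Q (g s \<omega>) s \<omega> \<partial>M)"
    using i1 i2 K(1) by simp
  also have "\<dots> = (\<integral>\<omega>. h \<omega> * of_bool (z s \<omega>) \<partial>M) - (\<integral>\<omega>. f \<omega> * Q (g s \<omega>) s \<omega> \<partial>M)"
    using K(2) by simp
  also have "\<dots> \<le> (\<integral>\<omega>. h \<omega> * of_bool (z s \<omega>) \<partial>M)"
    using integral_nonneg_AE[of "\<lambda>\<omega>. f \<omega> * Q (g s \<omega>) s \<omega>" M] fQ by simp
  also have "\<dots> \<le> (\<integral>\<omega>. 16 / Tr\<^sup>2 * of_bool (z s \<omega>) \<partial>M)"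
  proof (rule integral_mono[OF i2])
    show "integrable M (\<lambda>\<omega>. 16 / Tr\<^sup>2 * of_bool (z s \<omega>))" using iz by simp
    fix \<omega> show "h \<omega> * of_bool (z s \<omega>) \<le> 16 / Tr\<^sup>2 * of_bool (z s \<omega>)" using hb[of \<omega>] by (cases "z s \<omega>") auto
  qed
  also have "\<dots> = 16 / Tr\<^sup>2 * (\<integral>\<omega>. of_bool (z s \<omega>) \<partial>M)" by simp
  finally show ?thesis .
qed

end

context L24 begin

lemma S_sum: assumes "1 \<le> s" shows "s \<le> m*n \<longrightarrow> (\<integral>\<omega>. S s \<omega> \<partial>M) \<le> 16 / Tr\<^sup>2 * (\<Sum>i\<in>{1..<s}. \<integral>\<omega>. of_bool (z i \<omega>) \<partial>M)"
  using assms
proof (induction s rule: nat_induct_at_least)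
  case base
  have "S 1 \<omega> = 0" for \<omega> unfolding S_def V_def by simp
  then show ?case by simp
next
  case (Suc s)
  show ?case
  proof
    assume le: "Suc s \<le> m*n"
    then have s: "1 \<le> s" "s < m*n" using Suc.hyps by auto
    have "(\<integral>\<omega>. S (Suc s) \<omega> \<partial>M) = (\<integral>\<omega>. S s \<omega> \<partial>M) + (\<integral>\<omega>. (E s \<omega>)\<^sup>2 \<partial>M)" by (rule S_step[OF s])
    also have "\<dots> \<le> 16 / Tr\<^sup>2 * (\<Sum>i\<in>{1..<s}. \<integral>\<omega>. of_bool (z i \<omega>) \<partial>M) + 16 / Tr\<^sup>2 * (\<integral>\<omega>. of_bool (z s \<omega>) \<partial>M)"
      using Suc.IH s E2_bound[of s] by (intro add_mono) auto
    also have "\<dots> = 16 / Tr\<^sup>2 * (\<Sum>i\<in>{1..<Suc s}. \<integral>\<omega>. of_bool (z i \<omega>) \<partial>M)"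
      using s by (simp add: sum.atLeastLessThan_Suc distrib_left)
    finally show "(\<integral>\<omega>. S (Suc s) \<omega> \<partial>M) \<le> 16 / Tr\<^sup>2 * (\<Sum>i\<in>{1..<Suc s}. \<integral>\<omega>. of_bool (z i \<omega>) \<partial>M)" .
  qed
qed

lemma cs: fixes W :: "'a \<Rightarrow> real" assumes "integrable M W" "integrable M (\<lambda>x. (W x)\<^sup>2)"
  shows "(\<integral>x. W x \<partial>M) \<le> sqrt (\<integral>x. (W x)\<^sup>2 \<partial>M)"
proof -
  have "0 \<le> (\<integral>x. (W x)\<^sup>2 \<partial>M) - (\<integral>x. W x \<partial>M)\<^sup>2"
    using variance_positive[of W] variance_eq[OF assms] by simp
  then show ?thesis by (intro real_le_rsqrt) simp
qed

lemma q0_bound: "\<bar>q0 - 1 / real n\<bar> \<le> sqrt (real m) / Tr"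
proof -
  have np: "real n > 0" using n_pos by simp
  have tyr: "Tr - Yr \<ge> 5 * Tr / 6" using Yr_Tr by simp
  have tp: "Tr - Yr > 0" using tyr Tr_pos by simp
  have eq: "q0 - 1 / real n = Yr / (real n * (Tr - Yr))"
    unfolding q0_def using np tp by (simp add: field_simps Tr_def)
  have "Yr / (real n * (Tr - Yr)) \<le> (sqrt (real m) * real n / 6) / (real n * (5 * Tr / 6))"
  proof (rule frac_le)
    show "0 \<le> sqrt (real m) * real n / 6" by simp
    show "Yr \<le> sqrt (real m) * real n / 6" by (rule Yr_le)
    show "0 < real n * (5 * Tr / 6)" using np Tr_pos by simp
    show "real n * (5 * Tr / 6) \<le> real n * (Tr - Yr)" using tyr np by (intro mult_left_mono) auto
  qed
  also have "\<dots> = sqrt (real m) / (5 * Tr)" using np Tr_pos by (simp add: field_simps)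
  also have "\<dots> \<le> sqrt (real m) / Tr" using Tr_pos by (simp add: frac_le)
  finally show ?thesis using eq Yr_nn np tp by simp
qed

lemma final_ineq: assumes "Z \<ge> 0" shows "sqrt (real m) + 4 * sqrt Z \<le> 4 * sqrt (6 * Z + 8 * real m)"
proof -
  define a where "a = sqrt (real m)"
  define b where "b = sqrt Z"
  have a2: "a\<^sup>2 = real m" unfolding a_def by simp
  have b2: "b\<^sup>2 = Z" unfolding b_def using assms by simp
  have "0 \<le> (a - b)\<^sup>2" by simp
  then have ab: "2 * (a * b) \<le> a * a + b * b" by (simp add: power2_eq_square algebra_simps)
  have aa: "0 \<le> a * a" "0 \<le> b * b" by simp_all
  have e1: "(a + 4 * b)\<^sup>2 = a * a + 8 * (a * b) + 16 * (b * b)" by (simp add: power2_eq_square algebra_simps)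
  have e2: "16 * (6 * Z + 8 * real m) = 96 * (b * b) + 128 * (a * a)"
    unfolding a2[symmetric] b2[symmetric] by (simp add: power2_eq_square)
  have "(a + 4 * b)\<^sup>2 \<le> 16 * (6 * Z + 8 * real m)"
    unfolding e1 e2 using ab aa by linarith
  then have "a + 4 * b \<le> sqrt (16 * (6 * Z + 8 * real m))" by (rule real_le_rsqrt)
  also have "\<dots> = 4 * sqrt (6 * Z + 8 * real m)"
  proof -
    have s16: "sqrt (16::real) = 4" using real_sqrt_abs[of "4::real"] by simp
    show ?thesis by (simp only: real_sqrt_mult s16)
  qed
  finally show ?thesis unfolding a_def b_def .
qed

end

context L24 begin

lemma main: assumes t: "t \<in> {1..m*n}"
  shows "\<bar>\<integral>\<omega>. of_bool (real (acount (\<lambda>i. g i \<omega>) (g t \<omega>) t) \<le> real (m*n) / 2)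
                 * (of_bool (z t \<omega>) - 1 / real n) \<partial>M\<bar>
         \<le> 4 / real (m*n) * sqrt (6 * (\<Sum>i=1..m*n. \<integral>\<omega>. of_bool (z i \<omega>) \<partial>M) + 8 * real m)"
proof -
  have t1: "1 \<le> t" "t \<le> m*n" using t by auto
  define Z :: real where "Z = (\<Sum>i=1..m*n. \<integral>\<omega>. of_bool (z i \<omega>) \<partial>M)"
  have Z0: "Z \<ge> 0" unfolding Z_def by (intro sum_nonneg integral_nonneg_AE) auto
  have form: "of_bool (real (acount (\<lambda>i. g i \<omega>) (g t \<omega>) t) \<le> real (m*n) / 2) = H t \<omega>" for \<omega>
    unfolding H_def A_def Tr_def ..
  have HF: "H t \<in> borel_measurable (F t)"
  proof (rule hc_F, rule hcI2)
    fix \<omega> \<omega>' assume ag: "agree t \<omega> \<omega>'"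
    then show "H t \<omega> = H t \<omega>'" using agH[OF ag, of t] t1 by simp
  qed
  have HM: "H t \<in> borel_measurable M" by (rule measurable_from_subalg[OF subalg[OF t1(2)] HF])
  have H01: "0 \<le> H t \<omega> \<and> H t \<omega> \<le> 1" for \<omega> unfolding H_def by simp
  have Hb: "\<bar>H t \<omega>\<bar> \<le> 1" for \<omega> using H01[of \<omega>] by simp
  have Hz: "A (g t \<omega>) t \<omega> \<le> Tr / 2" if "H t \<omega> \<noteq> 0" for \<omega>
    using that unfolding H_def by (cases "A (g t \<omega>) t \<omega> \<le> Tr / 2") auto
  note K = key[OF t HF Hb Hz]
  have zM: "(\<lambda>\<omega>. of_bool (z t \<omega>) :: real) \<in> borel_measurable M" by (rule zz_meas[OF t])
  have iH: "integrable M (H t)" by (rule intg[OF HM Hb])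
  have iHz: "integrable M (\<lambda>\<omega>. H t \<omega> * of_bool (z t \<omega>))"
  proof (rule intg[where B=1])
    fix \<omega> show "\<bar>H t \<omega> * of_bool (z t \<omega>)\<bar> \<le> 1" using Hb[of \<omega>] by (cases "z t \<omega>") auto
  qed (use HM zM in simp)
  define W where "W \<omega> = V (g t \<omega>) t \<omega>" for \<omega>
  have WF: "W \<in> borel_measurable (F t)"
  proof (rule hc_F, rule hcI2)
    fix \<omega> \<omega>' assume ag: "agree t \<omega> \<omega>'"
    then show "W \<omega> = W \<omega>'" unfolding W_def using agV[OF ag, of t] agg[OF ag, of t] t1 by simp
  qed
  have WM: "W \<in> borel_measurable M" by (rule measurable_from_subalg[OF subalg[OF t1(2)] WF])
  have Wb: "\<bar>W \<omega>\<bar> \<le> Tr * bE" for \<omega> unfolding W_def by (rule V_bound) (use t1 in simp)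
  have iHW: "integrable M (\<lambda>\<omega>. H t \<omega> * W \<omega>)"
  proof (rule intg[where B="Tr * bE"])
    fix \<omega> show "\<bar>H t \<omega> * W \<omega>\<bar> \<le> Tr * bE"
    proof -
      have "H t \<omega> * \<bar>W \<omega>\<bar> \<le> \<bar>W \<omega>\<bar>" by (rule mult_left_le_one_le) (use H01[of \<omega>] in auto)
      then show ?thesis using Wb[of \<omega>] H01[of \<omega>] by (simp add: abs_mult)
    qed
  qed (use HM WM in simp)
  have iaW: "integrable M (\<lambda>\<omega>. \<bar>W \<omega>\<bar>)" by (rule intg[where B="Tr * bE"]) (use WM Wb in auto)
  have iW2: "integrable M (\<lambda>\<omega>. (\<bar>W \<omega>\<bar>)\<^sup>2)"
  proof (rule intg[where B="(Tr * bE)\<^sup>2"])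
    fix \<omega> show "\<bar>(\<bar>W \<omega>\<bar>)\<^sup>2\<bar> \<le> (Tr * bE)\<^sup>2"
    proof -
      have "(\<bar>W \<omega>\<bar>)\<^sup>2 \<le> (Tr * bE)\<^sup>2" by (rule power_mono[OF Wb[of \<omega>]]) simp
      then show ?thesis by simp
    qed
  qed (use WM in simp)
  have HQ: "H t \<omega> * Q (g t \<omega>) t \<omega> = q0 * H t \<omega> - H t \<omega> * W \<omega>" for \<omega>
  proof (cases "A (g t \<omega>) t \<omega> \<le> Tr / 2")
    case True
    then have "Q (g t \<omega>) t \<omega> = q0 - W \<omega>" unfolding W_def using ident[OF t1(1)] by blast
    then show ?thesis by (simp add: right_diff_distrib left_diff_distrib mult.commute)
  next
    case False then show ?thesis unfolding H_def by simp
  qed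
  define I where "I = (\<integral>\<omega>. H t \<omega> * (of_bool (z t \<omega>) - 1 / real n) \<partial>M)"
  have "I = (\<integral>\<omega>. H t \<omega> * of_bool (z t \<omega>) - H t \<omega> / real n \<partial>M)"
    unfolding I_def by (simp add: right_diff_distrib)
  also have "\<dots> = (\<integral>\<omega>. H t \<omega> * of_bool (z t \<omega>) \<partial>M) - (\<integral>\<omega>. H t \<omega> \<partial>M) / real n"
    using iHz iH by simp
  also have "\<dots> = (\<integral>\<omega>. q0 * H t \<omega> - H t \<omega> * W \<omega> \<partial>M) - (\<integral>\<omega>. H t \<omega> \<partial>M) / real n"
    using K(2) HQ by simp
  also have "\<dots> = (q0 - 1 / real n) * (\<integral>\<omega>. H t \<omega> \<partial>M) - (\<integral>\<omega>. H t \<omega> * W \<omega> \<partial>M)"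
    using iH iHW by (simp add: algebra_simps)
  finally have Ieq: "I = (q0 - 1 / real n) * (\<integral>\<omega>. H t \<omega> \<partial>M) - (\<integral>\<omega>. H t \<omega> * W \<omega> \<partial>M)" .
  have intH: "\<bar>\<integral>\<omega>. H t \<omega> \<partial>M\<bar> \<le> 1"
  proof -
    have "0 \<le> (\<integral>\<omega>. H t \<omega> \<partial>M)" using H01 by (intro integral_nonneg_AE) auto
    moreover have "(\<integral>\<omega>. H t \<omega> \<partial>M) \<le> (\<integral>\<omega>. 1 \<partial>M)"
      using H01 iH by (intro integral_mono) auto
    ultimately show ?thesis by (simp add: prob_space)
  qed
  have "\<bar>(q0 - 1 / real n) * (\<integral>\<omega>. H t \<omega> \<partial>M)\<bar> \<le> \<bar>q0 - 1 / real n\<bar> * 1"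
    unfolding abs_mult using intH by (intro mult_left_mono) auto
  then have p1: "\<bar>(q0 - 1 / real n) * (\<integral>\<omega>. H t \<omega> \<partial>M)\<bar> \<le> sqrt (real m) / Tr" using q0_bound by simp
  have "\<bar>\<integral>\<omega>. H t \<omega> * W \<omega> \<partial>M\<bar> \<le> (\<integral>\<omega>. \<bar>H t \<omega> * W \<omega>\<bar> \<partial>M)" by (rule integral_abs_bound)
  also have "\<dots> \<le> (\<integral>\<omega>. \<bar>W \<omega>\<bar> \<partial>M)"
  proof (rule integral_mono[OF _ iaW])
    show "integrable M (\<lambda>\<omega>. \<bar>H t \<omega> * W \<omega>\<bar>)" using iHW by simp
    fix \<omega> show "\<bar>H t \<omega> * W \<omega>\<bar> \<le> \<bar>W \<omega>\<bar>" using H01[of \<omega>] by (simp add: abs_mult mult_left_le_one_le)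
  qed
  also have "\<dots> \<le> sqrt (\<integral>\<omega>. (\<bar>W \<omega>\<bar>)\<^sup>2 \<partial>M)" by (rule cs[OF iaW iW2])
  also have "\<dots> \<le> sqrt (\<integral>\<omega>. S t \<omega> \<partial>M)"
  proof (rule real_sqrt_le_mono, rule integral_mono[OF iW2])
    show "integrable M (S t)" by (rule intg[OF S_meas S_bound]) (use t1 in auto)
    fix \<omega> assume \<omega>: "\<omega> \<in> space M"
    have gk: "g t \<omega> \<in> {1..n}" using grange[OF t \<omega>] .
    have "(W \<omega>)\<^sup>2 \<le> S t \<omega>" unfolding W_def S_def
      by (rule member_le_sum[OF gk]) auto
    then show "(\<bar>W \<omega>\<bar>)\<^sup>2 \<le> S t \<omega>" by simp
  qed
  also have "\<dots> \<le> sqrt (16 / Tr\<^sup>2 * Z)"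
  proof (rule real_sqrt_le_mono)
    have "(\<integral>\<omega>. S t \<omega> \<partial>M) \<le> 16 / Tr\<^sup>2 * (\<Sum>i\<in>{1..<t}. \<integral>\<omega>. of_bool (z i \<omega>) \<partial>M)"
      using S_sum[OF t1(1)] t1 by blast
    also have "\<dots> \<le> 16 / Tr\<^sup>2 * Z" unfolding Z_def
    proof (rule mult_left_mono)
      show "(\<Sum>i\<in>{1..<t}. \<integral>\<omega>. of_bool (z i \<omega>) \<partial>M) \<le> (\<Sum>i = 1..m * n. \<integral>\<omega>. (of_bool (z i \<omega>)::real) \<partial>M)"
      proof (rule sum_mono2)
        show "{1..<t} \<subseteq> {1..m*n}" using t1 by auto
        fix b show "0 \<le> (\<integral>\<omega>. (of_bool (z b \<omega>)::real) \<partial>M)" by (intro integral_nonneg_AE) auto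
      qed simp
    qed simp
    finally show "(\<integral>\<omega>. S t \<omega> \<partial>M) \<le> 16 / Tr\<^sup>2 * Z" .
  qed
  also have "\<dots> = 4 / Tr * sqrt Z"
  proof -
    have "16 / Tr\<^sup>2 = (4 / Tr)\<^sup>2" by (simp add: power2_eq_square)
    then show ?thesis using Tr_pos by (simp add: real_sqrt_mult)
  qed
  finally have p2: "\<bar>\<integral>\<omega>. H t \<omega> * W \<omega> \<partial>M\<bar> \<le> 4 / Tr * sqrt Z" .
  have "\<bar>I\<bar> \<le> sqrt (real m) / Tr + 4 / Tr * sqrt Z" unfolding Ieq using p1 p2 by linarith
  also have "\<dots> = (sqrt (real m) + 4 * sqrt Z) / Tr" by (simp add: add_divide_distrib)
  also have "\<dots> \<le> (4 * sqrt (6 * Z + 8 * real m)) / Tr"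
    using final_ineq[OF Z0] Tr_pos by (intro divide_right_mono) auto
  also have "\<dots> = 4 / real (m*n) * sqrt (6 * Z + 8 * real m)" unfolding Tr_def by simp
  finally show ?thesis unfolding I_def Z_def form .
qed

end

theorem lemma2p4:
  fixes M :: "'a measure" and R :: "'r measure"
    and m n :: nat
    and deck :: "'a \<Rightarrow> nat list"
    and \<rho> :: "'a \<Rightarrow> 'r"
    and G :: "nat \<Rightarrow> 'r \<Rightarrow> bool list \<Rightarrow> nat"
    and g :: "nat \<Rightarrow> 'a \<Rightarrow> nat"
    and y z :: "nat \<Rightarrow> 'a \<Rightarrow> bool"
    and t :: nat
  assumes P: "prob_space M"
    and m_pos: "m \<ge> 1" and n_pos: "n \<ge> 1"
    and n_big: "real n \<ge> 1200 * sqrt (real m)"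
    \<comment> \<open>uniformly shuffled deck\<close>
    and deck_meas: "deck \<in> measurable M (count_space UNIV)"
    and deck_unif: "\<forall>xs\<in>decks m n. measure M {\<omega> \<in> space M. deck \<omega> = xs} = 1 / real (card (decks m n))"
    \<comment> \<open>guessing strategy, randomized by \<rho> independently of the deck\<close>
    and rho_meas: "\<rho> \<in> measurable M R"
    and rho_indep: "distr M (R \<Otimes>\<^sub>M count_space UNIV) (\<lambda>\<omega>. (\<rho> \<omega>, deck \<omega>))
                    = distr M R \<rho> \<Otimes>\<^sub>M distr M (count_space UNIV) deck"
    and G_meas: "\<forall>i bs. (\<lambda>r. G i r bs) \<in> measurable R (count_space UNIV)"
    and G_range: "\<forall>i\<in>{1..m*n}. \<forall>r\<in>space R. \<forall>bs. G i r bs \<in> {1..n}"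
    and play: "\<forall>\<omega>\<in>space M. \<forall>i\<in>{1..m*n}.
                 g i \<omega> = G i (\<rho> \<omega>) (map (\<lambda>j. y j \<omega>) [1..<i])
               \<and> y i \<omega> = (deck \<omega> ! (i - 1) = g i \<omega>)"
    \<comment> \<open>the auxiliary random vector z\<close>
    and z_meas: "\<forall>i\<in>{1..m*n}. z i \<in> measurable M (count_space UNIV)"
    and cond_a: "AE \<omega> in M. \<forall>k\<in>{1..n}. \<forall>s\<in>{1..m*n+1}.
        int m - max (int (m*n) - int (acount (\<lambda>i. g i \<omega>) k s) - int (Ybd m n)) 0
          \<le> int (ccount (\<lambda>i. g i \<omega>) (\<lambda>i. z i \<omega>) k s)
        \<and> ccount (\<lambda>i. g i \<omega>) (\<lambda>i. z i \<omega>) k s \<le> m"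
    and cond_b: "\<forall>s\<in>{1..m*n}. \<forall>gs ys. measure M (gy_cell M g y s gs ys) > 0 \<longrightarrow>
        prob_space.indep_vars (uniform_measure M (gy_cell M g y s gs ys))
            (\<lambda>_. count_space UNIV) z {1..s}
      \<and> distr (uniform_measure M (gy_cell M g y s gs ys)) (count_space UNIV \<Otimes>\<^sub>M count_space UNIV)
            (\<lambda>\<omega>. (map (\<lambda>i. z i \<omega>) [1..<s+1],
                   (map (\<lambda>i. g i \<omega>) [1..<m*n+1], map (\<lambda>i. y i \<omega>) [1..<m*n+1])))
          = distr (uniform_measure M (gy_cell M g y s gs ys)) (count_space UNIV)
              (\<lambda>\<omega>. map (\<lambda>i. z i \<omega>) [1..<s+1])
            \<Otimes>\<^sub>M distr (uniform_measure M (gy_cell M g y s gs ys)) (count_space UNIV)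
              (\<lambda>\<omega>. (map (\<lambda>i. g i \<omega>) [1..<m*n+1], map (\<lambda>i. y i \<omega>) [1..<m*n+1]))"
    and cond_c: "\<forall>s\<in>{1..m*n}. AE \<omega> in M.
        int (acount (\<lambda>i. g i \<omega>) (g s \<omega>) s) < int (m*n) - int (Ybd m n) \<longrightarrow>
        real_cond_exp M (hist_algebra M g z s) (\<lambda>\<omega>. of_bool (z s \<omega>)) \<omega>
          = (real m - real (ccount (\<lambda>i. g i \<omega>) (\<lambda>i. z i \<omega>) (g s \<omega>) s))
            / (real (m*n) - real (acount (\<lambda>i. g i \<omega>) (g s \<omega>) s) - real (Ybd m n))"
    and cond_d: "\<forall>s\<in>{1..m*n}. AE \<omega> in M.
        real_cond_exp M (hist_algebra M g y s) (\<lambda>\<omega>. of_bool (y s \<omega>)) \<omega>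
          \<le> real_cond_exp M (hist_algebra M g z s) (\<lambda>\<omega>. of_bool (z s \<omega>)) \<omega>
        \<longrightarrow> (y s \<omega> \<longrightarrow> z s \<omega>)"
    and t_range: "t \<in> {1..m*n}"
  shows "\<bar>\<integral>\<omega>. of_bool (real (acount (\<lambda>i. g i \<omega>) (g t \<omega>) t) \<le> real (m*n) / 2)
                 * (of_bool (z t \<omega>) - 1 / real n) \<partial>M\<bar>
         \<le> 4 / real (m*n) * sqrt (6 * (\<Sum>i=1..m*n. \<integral>\<omega>. of_bool (z i \<omega>) \<partial>M) + 8 * real m)"
proof -
  have gy: "i \<in> {1..m*n} \<longrightarrow> g i \<in> measurable M (count_space UNIV) \<and> y i \<in> measurable M (count_space UNIV)" for i
  proof (induction i rule: less_induct)
    case (less i)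
    show ?case
    proof
      assume i: "i \<in> {1..m*n}"
      have ym: "y j \<in> measurable M (count_space UNIV)" if "j \<in> set [1..<i]" for j
        using less.IH[of j] that i by auto
      have L: "(\<lambda>\<omega>. map (\<lambda>j. y j \<omega>) [1..<i]) \<in> measurable M (count_space UNIV)"
        by (rule meas_map_list) (rule ym)
      have gm0: "(\<lambda>\<omega>. G i (\<rho> \<omega>) (map (\<lambda>j. y j \<omega>) [1..<i])) \<in> measurable M (count_space UNIV)"
      proof (rule measurable_compose_countable'[where f="\<lambda>bs \<omega>. G i (\<rho> \<omega>) bs" and g="\<lambda>\<omega>. map (\<lambda>j. y j \<omega>) [1..<i]" and I=UNIV])
        fix bs :: "bool list"
        show "(\<lambda>\<omega>. G i (\<rho> \<omega>) bs) \<in> measurable M (count_space UNIV)"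
          using measurable_compose[OF rho_meas, where g="\<lambda>r. G i r bs" and L="count_space UNIV"] G_meas by blast
      qed (use L in auto)
      have gm: "g i \<in> measurable M (count_space UNIV)"
        using gm0 measurable_cong[of M "g i" "\<lambda>\<omega>. G i (\<rho> \<omega>) (map (\<lambda>j. y j \<omega>) [1..<i])" "count_space UNIV"] play i
        by blast
      have ym0: "(\<lambda>\<omega>. deck \<omega> ! (i - 1) = g i \<omega>) \<in> measurable M (count_space UNIV)"
      proof (rule measurable_compose_countable'[where f="\<lambda>k \<omega>. deck \<omega> ! (i - 1) = k" and g="g i" and I=UNIV])
        fix k :: nat
        show "(\<lambda>\<omega>. deck \<omega> ! (i - 1) = k) \<in> measurable M (count_space UNIV)"
          using measurable_compose[OF deck_meas, where g="\<lambda>xs. xs ! (i - 1) = k" and L="count_space UNIV"] by simp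
      qed (use gm in auto)
      have "y i \<in> measurable M (count_space UNIV)"
        using ym0 measurable_cong[of M "y i" "\<lambda>\<omega>. deck \<omega> ! (i - 1) = g i \<omega>" "count_space UNIV"] play i
        by blast
      then show "g i \<in> measurable M (count_space UNIV) \<and> y i \<in> measurable M (count_space UNIV)" using gm by simp
    qed
  qed
  have grange: "g i \<omega> \<in> {1..n}" if "i \<in> {1..m*n}" "\<omega> \<in> space M" for i \<omega>
  proof -
    have "\<rho> \<omega> \<in> space R" using measurable_space[OF rho_meas that(2)] .
    then show ?thesis using play G_range that by metis
  qed
  have L: "L24 M m n g z"
  proof (rule L24.intro)
    show "\<And>i. i \<in> {1..m*n} \<Longrightarrow> g i \<in> measurable M (count_space UNIV)" using gy by blast
    show "\<And>i. i \<in> {1..m*n} \<Longrightarrow> z i \<in> measurable M (count_space UNIV)" using z_meas by blast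
    show "\<And>i \<omega>. i \<in> {1..m*n} \<Longrightarrow> \<omega> \<in> space M \<Longrightarrow> g i \<omega> \<in> {1..n}" by (rule grange)
  qed (rule P, rule m_pos, rule n_pos, rule n_big, rule cond_c)
  show ?thesis by (rule L24.main[OF L t_range])
qed

end
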